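(* Let $\{X_t\}_{t\ge0}$ follow $X_{t+1}=\sigma(A_\star X_t)+HV_t$, $X_0=HV_0$, with $A_\star,H\in\mathbb R^{d_x\times d_x}$, $V_t$ i.i.d. $N(0,I_{d_x})$, and $\sigma$ applying a scalar function coordinatewise. Assume: (1) $H$ is full rank; (2) the scalar $\sigma$ is $1$-Lipschitz, $\sigma(0)=0$, and there is $\zeta\in(0,1]$ with $|\sigma(x)-\sigma(y)|\ge\zeta|x-y|$ for all $x,y$; (3) there exist a positive definite diagonal $P_\star\succcurlyeq I$ and $\rho\in(0,1)$ with $A_\star^\top P_\star A_\star\preccurlyeq\rho P_\star$. Then $$\sup_{t\in\mathbb N}\mathbb{E}\|X_t\|_2^4\le B_X^4,\qquad B_X=\frac{12\sqrt2\,\|H\|_{op}\|P_\star\|_{op}^{1/2}\sqrt{d_x}}{1-\rho}.$$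
   Context: $\|\cdot\|_{op}$ is the largest singular value; $\preccurlyeq$ is the Loewner order. *)

theory Defs
  imports "HOL-Analysis.Analysis" "HOL-Probability.Probability"
begin

definition coordwise :: "(real \<Rightarrow> real) \<Rightarrow> real^'n \<Rightarrow> real^'n" where
  "coordwise s x = (\<chi> i. s (x $ i))"

definition loewner_le :: "real^'n^'n \<Rightarrow> real^'n^'n \<Rightarrow> bool" where
  "loewner_le A B \<longleftrightarrow> (\<forall>x. x \<bullet> (A *v x) \<le> x \<bullet> (B *v x))"

definition op_norm :: "real^'n^'m \<Rightarrow> real" where
  "op_norm A = onorm (\<lambda>x. A *v x)"

text \<open>The process X_{t+1} = sigma(A X_t) + H V_t (with V_{t+1}), X_0 = H V_0.\<close>
fun proc :: "(real \<Rightarrow> real) \<Rightarrow> real^'n^'n \<Rightarrow> real^'n^'n \<Rightarrow> (nat \<Rightarrow> 'a \<Rightarrow> real^'n)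
     \<Rightarrow> nat \<Rightarrow> 'a \<Rightarrow> real^'n" where
  "proc s A H V 0 \<omega> = H *v V 0 \<omega>"
| "proc s A H V (Suc t) \<omega> = coordwise s (A *v proc s A H V t \<omega>) + H *v V (Suc t) \<omega>"

end

theory Submission
  imports Defs
begin

lemma ennreal_lin:
  fixes a x b y :: real
  assumes "0 \<le> a" "0 \<le> x" "0 \<le> b" "0 \<le> y"
  shows "ennreal a * ennreal x + ennreal b * ennreal y = ennreal (a*x + b*y)"
  using assms by (simp add: ennreal_plus ennreal_mult)

lemma geo_fix:
  fixes r K v :: real
  assumes "r < 1" "0 < v"
  shows "r * (K / ((1 - r) * v)) + 1 / v * K = K / ((1 - r) * v)"
  using assms by (simp add: field_simps)

lemma meas_cart:
  fixes f :: "'a \<Rightarrow> real^'n"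
  assumes "\<And>i. (\<lambda>x. f x $ i) \<in> borel_measurable M"
  shows "f \<in> borel_measurable M"
  by (subst borel_measurable_euclidean_space) (auto simp: Basis_vec_def inner_axis assms)

lemma quad_transpose:
  fixes A P :: "real^'n^'n"
  shows "(A *v x) \<bullet> (P *v (A *v x)) = x \<bullet> ((transpose A ** P ** A) *v x)"
proof -
  have "x \<bullet> ((transpose A ** P ** A) *v x) = x \<bullet> (transpose A *v (P *v (A *v x)))"
    by (simp add: matrix_vector_mul_assoc matrix_mul_assoc)
  also have "\<dots> = (x v* transpose A) \<bullet> (P *v (A *v x))" by (rule dot_lmul_matrix[symmetric])
  also have "\<dots> = (A *v x) \<bullet> (P *v (A *v x))" by (simp only: vector_transpose_matrix)
  finally show ?thesis by simp
qed

lemma quad_diag: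
  fixes P :: "real^'n^'n"
  assumes "\<And>i j. i \<noteq> j \<Longrightarrow> P $ i $ j = 0"
  shows "x \<bullet> (P *v x) = (\<Sum>i\<in>UNIV. P$i$i * (x$i)^2)"
proof -
  have "(P *v x) $ i = P$i$i * x$i" for i
  proof -
    have "(P *v x) $ i = (\<Sum>j\<in>UNIV. P$i$j * x$j)" by (simp add: matrix_vector_mult_def)
    also have "\<dots> = P$i$i * x$i"
      by (subst sum.remove[of _ i]) (auto simp: assms intro!: sum.neutral)
    finally show ?thesis .
  qed
  then show ?thesis by (simp add: inner_vec_def power2_eq_square mult_ac)
qed

lemma convex4:
  fixes r u b :: real
  assumes "0 \<le> r" "r < 1"
  shows "(r * u + b)^4 \<le> r * u^4 + b^4 / (1 - r)^3"
proof -
  have c: "convex_on UNIV (\<lambda>x::real. x^4)" by (rule convex_power_even) simp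
  have "((1 - (1-r)) *\<^sub>R u + (1-r) *\<^sub>R (b/(1-r)))^4 \<le> (1 - (1-r)) * u^4 + (1-r) * (b/(1-r))^4"
    using convex_onD[OF c, of "1-r" u "b/(1-r)"] assms by simp
  moreover have "(1 - (1-r)) *\<^sub>R u + (1-r) *\<^sub>R (b/(1-r)) = r * u + b" using assms by simp
  moreover have "(1-r) * (b/(1-r))^4 = b^4 / (1 - r)^3" using assms
  proof -
    have "(1-r)^4 = (1-r) * (1-r)^3" by (simp add: eval_nat_numeral)
    then show ?thesis using assms by (simp add: power_divide)
  qed
  ultimately show ?thesis by simp
qed

lemma std_normal_4:
  "(\<integral>\<^sup>+x. ennreal (std_normal_density x * x^4) \<partial>lborel) = 3"
proof -
  have h: "has_bochner_integral lborel (\<lambda>x. std_normal_density x * x ^ (2 * 2)) (fact (2 * 2) / (2^2 * fact 2))"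
    by (rule std_normal_moment_even)
  have f: "(fact (2 * 2) / (2^2 * fact 2) :: real) = 3" by (simp add: fact_numeral)
  have h4: "has_bochner_integral lborel (\<lambda>x. std_normal_density x * x ^ 4) 3"
    using h f by simp
  have "integrable lborel (\<lambda>x. std_normal_density x * x ^ 4)"
    using h4 by (simp add: has_bochner_integral_iff)
  moreover have "integral\<^sup>L lborel (\<lambda>x. std_normal_density x * x ^ 4) = 3"
    using h4 by (simp add: has_bochner_integral_iff)
  ultimately show ?thesis
    by (subst nn_integral_eq_integral) (auto simp: normal_density_nonneg)
qed
theorem proposition19:
  fixes M :: "'a measure"
    and V :: "nat \<Rightarrow> 'a \<Rightarrow> real^'n"
    and A H P :: "real^'n^'n"
    and s :: "real \<Rightarrow> real"
    and \<zeta> \<rho> :: real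
  assumes "prob_space M"
    and V_indep: "prob_space.indep_vars M (\<lambda>_. borel) (\<lambda>(t, i) \<omega>. V t \<omega> $ i) UNIV"
    and V_gauss: "\<And>t i. distributed M lborel (\<lambda>\<omega>. V t \<omega> $ i) std_normal_density"
    and H_rank: "rank H = CARD('n)"
    and s_lip: "\<And>x y. \<bar>s x - s y\<bar> \<le> \<bar>x - y\<bar>"
    and s_zero: "s 0 = 0"
    and \<zeta>_pos: "0 < \<zeta>" and \<zeta>_le: "\<zeta> \<le> 1"
    and s_lower: "\<And>x y. \<bar>s x - s y\<bar> \<ge> \<zeta> * \<bar>x - y\<bar>"
    and P_diag: "\<And>i j. i \<noteq> j \<Longrightarrow> P $ i $ j = 0"
    and P_pd: "\<And>x. x \<noteq> 0 \<Longrightarrow> x \<bullet> (P *v x) > 0"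
    and P_ge_I: "loewner_le (mat 1) P"
    and \<rho>_pos: "0 < \<rho>" and \<rho>_lt: "\<rho> < 1"
    and stab: "loewner_le (transpose A ** P ** A) (\<rho> *\<^sub>R P)"
  shows "(SUP t. \<integral>\<^sup>+ \<omega>. ennreal (norm (proc s A H V t \<omega>) ^ 4) \<partial>M)
           \<le> ennreal ((12 * sqrt 2 * op_norm H * sqrt (op_norm P) * sqrt (real CARD('n)) / (1 - \<rho>)) ^ 4)"
proof -
  interpret prob_space M by fact
  define r where "r = sqrt \<rho>"
  have r0: "0 \<le> r" and r1: "r < 1" and r2: "r^2 = \<rho>"
    using \<rho>_pos \<rho>_lt by (auto simp: r_def)
  define d where "d = real CARD('n)"
  have pdiag: "1 \<le> P$i$i" for i
  proof -
    have "axis i 1 \<bullet> (mat 1 *v axis i (1::real)) \<le> axis i 1 \<bullet> (P *v axis i 1)"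
      using P_ge_I unfolding loewner_le_def by blast
    moreover have "axis i 1 \<bullet> (mat 1 *v axis i (1::real)) = 1" by (simp add: inner_axis_axis)
    moreover have "axis i 1 \<bullet> (P *v axis i 1) = P$i$i"
      by (metis inner_commute cart_eq_inner_axis matrix_vector_mult_basis column_def vec_lambda_beta)
    ultimately show ?thesis by simp
  qed
  have pd0: "0 \<le> P$i$i" for i using pdiag[of i] by linarith
  define q where "q x = (\<chi> i. sqrt (P$i$i) * x$i)" for x :: "real^'n"
  define pn where "pn x = norm (q x)" for x
  have pn_nonneg: "0 \<le> pn x" for x by (simp add: pn_def)
  have pn_sq: "(pn x)^2 = x \<bullet> (P *v x)" for x
  proof -
    have "(pn x)^2 = (\<Sum>i\<in>UNIV. (sqrt (P$i$i) * x$i)^2)"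
      by (simp only: pn_def q_def power2_norm_eq_inner) (simp add: inner_vec_def power2_eq_square)
    also have "\<dots> = (\<Sum>i\<in>UNIV. P$i$i * (x$i)^2)"
      using pd0 by (simp add: power_mult_distrib)
    finally show ?thesis by (simp add: quad_diag[OF P_diag])
  qed
  have pn_ge: "norm x \<le> pn x" for x
  proof -
    have "x \<bullet> (mat 1 *v x) \<le> x \<bullet> (P *v x)"
      using P_ge_I unfolding loewner_le_def by blast
    then have "(norm x)^2 \<le> (pn x)^2" by (simp add: pn_sq power2_norm_eq_inner)
    then show ?thesis using pn_nonneg by (rule power2_le_imp_le)
  qed
  have pn_tri: "pn (x + y) \<le> pn x + pn y" for x y
  proof -
    have "q (x + y) = q x + q y" by (simp add: q_def vec_eq_iff algebra_simps)
    then show ?thesis by (simp add: pn_def norm_triangle_ineq)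
  qed
  have pn_coord: "pn (coordwise s y) \<le> pn y" for y
  proof -
    have "(s (y$i))^2 \<le> (y$i)^2" for i
      using s_lip[of "y$i" 0] s_zero by (simp add: abs_le_square_iff)
    then have "(\<Sum>i\<in>UNIV. P$i$i * (s (y$i))^2) \<le> (\<Sum>i\<in>UNIV. P$i$i * (y$i)^2)"
      using pdiag by (intro sum_mono mult_left_mono) (auto intro: order_trans[OF zero_le_one])
    then have "(pn (coordwise s y))^2 \<le> (pn y)^2"
      by (simp add: pn_sq quad_diag[OF P_diag] coordwise_def)
    then show ?thesis using pn_nonneg by (rule power2_le_imp_le)
  qed
  have pn_A: "pn (A *v x) \<le> r * pn x" for x
  proof -
    have "(pn (A *v x))^2 = x \<bullet> ((transpose A ** P ** A) *v x)"
      by (simp add: pn_sq quad_transpose)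
    also have "\<dots> \<le> x \<bullet> ((\<rho> *\<^sub>R P) *v x)"
      using stab unfolding loewner_le_def by blast
    also have "\<dots> = \<rho> * (x \<bullet> (P *v x))"
      by (simp only: scaleR_matrix_vector_assoc[symmetric] inner_scaleR_right)
    also have "\<dots> = (r * pn x)^2"
      by (simp add: power_mult_distrib r2 pn_sq)
    finally have "(pn (A *v x))^2 \<le> (r * pn x)^2" .
    then show ?thesis by (rule power2_le_imp_le) (simp add: r0 pn_nonneg)
  qed
  have opn: "norm (B *v x) \<le> op_norm B * norm x" for B :: "real^'n^'n" and x
    unfolding op_norm_def by (rule onorm[OF matrix_vector_mul_bounded_linear])
  have opn0: "0 \<le> op_norm B" for B :: "real^'n^'n"
    unfolding op_norm_def by (rule onorm_pos_le[OF matrix_vector_mul_bounded_linear])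
  define c where "c = sqrt (op_norm P) * op_norm H"
  have c0: "0 \<le> c" using opn0 by (simp add: c_def)
  have pn_H: "pn (H *v v) \<le> c * norm v" for v
  proof -
    have pny: "pn y \<le> sqrt (op_norm P) * norm y" for y
    proof -
      have "(pn y)^2 \<le> norm y * norm (P *v y)"
        unfolding pn_sq by (rule norm_cauchy_schwarz)
      also have "\<dots> \<le> norm y * (op_norm P * norm y)"
        by (intro mult_left_mono opn) auto
      also have "\<dots> = (sqrt (op_norm P) * norm y)^2"
        using opn0[of P] by (simp add: power_mult_distrib power2_eq_square)
      finally have "(pn y)^2 \<le> (sqrt (op_norm P) * norm y)^2" .
      then show ?thesis by (rule power2_le_imp_le) (simp add: opn0)
    qed
    have "pn (H *v v) \<le> sqrt (op_norm P) * norm (H *v v)" by (rule pny)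
    also have "\<dots> \<le> sqrt (op_norm P) * (op_norm H * norm v)"
      by (intro mult_left_mono opn) (auto simp: opn0)
    finally show ?thesis by (simp add: c_def mult_ac)
  qed
  have comp_m: "(\<lambda>\<omega>. f \<omega> $ i) \<in> borel_measurable M" if "f \<in> borel_measurable M" for f :: "'a \<Rightarrow> real^'n" and i
    by (rule borel_measurable_continuous_on[OF _ that]) (intro continuous_intros)
  have Vi: "(\<lambda>\<omega>. V t \<omega> $ i) \<in> borel_measurable M" for t i
    using distributed_measurable[OF V_gauss[of t i]] by (simp add: measurable_lborel1)
  have Vm: "V t \<in> borel_measurable M" for t
    by (rule meas_cart) (rule Vi)
  have linm: "(\<lambda>\<omega>. B *v f \<omega>) \<in> borel_measurable M" if "f \<in> borel_measurable M" for f :: "'a \<Rightarrow> real^'n" and B :: "real^'n^'n"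
    by (rule borel_measurable_continuous_on[OF _ that])
      (intro linear_continuous_on matrix_vector_mul_bounded_linear)
  have s_cont: "continuous_on UNIV s"
    by (rule lipschitz_on_continuous_on[of 1]) (auto intro!: lipschitz_onI simp: dist_real_def s_lip)
  have Xm: "proc s A H V t \<in> borel_measurable M" for t
  proof (induction t)
    case 0
    then show ?case using linm[OF Vm] by simp
  next
    case (Suc t)
    define e where "e = 1 / (1 - r)^3"
    have e0: "0 \<le> e" using r1 by (simp add: e_def)
    have "(\<lambda>\<omega>. coordwise s (A *v proc s A H V t \<omega>)) \<in> borel_measurable M"
    proof (rule meas_cart)
      fix i
      show "(\<lambda>\<omega>. coordwise s (A *v proc s A H V t \<omega>) $ i) \<in> borel_measurable M"
        unfolding coordwise_def using borel_measurable_continuous_on[OF s_cont comp_m[OF linm[OF Suc.IH]]]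
        by simp
    qed
    then show ?case using linm[OF Vm] by simp
  qed
  have pn_cont: "continuous_on UNIV pn"
    unfolding pn_def q_def by (intro continuous_intros)
  have pnm: "(\<lambda>\<omega>. pn (f \<omega>)) \<in> borel_measurable M" if "f \<in> borel_measurable M" for f :: "'a \<Rightarrow> real^'n"
    by (rule borel_measurable_continuous_on[OF pn_cont that])
  define b where "b t \<omega> = pn (H *v V t \<omega>)" for t \<omega>
  define a where "a t \<omega> = pn (proc s A H V t \<omega>)" for t \<omega>
  have bm: "(\<lambda>\<omega>. b t \<omega>) \<in> borel_measurable M" for t
    unfolding b_def by (rule pnm[OF linm[OF Vm]])
  have am: "(\<lambda>\<omega>. a t \<omega>) \<in> borel_measurable M" for t
    unfolding a_def by (rule pnm[OF Xm])
  have a0: "0 \<le> a t \<omega>" for t \<omega> by (simp add: a_def pn_nonneg)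
  have b0: "0 \<le> b t \<omega>" for t \<omega> by (simp add: b_def pn_nonneg)
  have step4: "a (Suc t) \<omega> ^ 4 \<le> r * a t \<omega> ^ 4 + b (Suc t) \<omega> ^ 4 / (1 - r)^3" for t \<omega>
  proof -
    have "a (Suc t) \<omega> \<le> pn (coordwise s (A *v proc s A H V t \<omega>)) + b (Suc t) \<omega>"
      unfolding a_def b_def by (simp add: pn_tri)
    also have "\<dots> \<le> r * a t \<omega> + b (Suc t) \<omega>"
      using order_trans[OF pn_coord pn_A] unfolding a_def by simp
    finally have "a (Suc t) \<omega> ^ 4 \<le> (r * a t \<omega> + b (Suc t) \<omega>) ^ 4"
      using a0 by (intro power_mono) auto
    also have "\<dots> \<le> r * a t \<omega> ^ 4 + b (Suc t) \<omega> ^ 4 / (1 - r)^3"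
      using convex4[OF r0 r1] by (simp add: power_mult_distrib)
    finally show ?thesis .
  qed
  have EVi: "(\<integral>\<^sup>+\<omega>. ennreal ((V t \<omega> $ i)^4) \<partial>M) = 3" for t i
  proof -
    have "(\<integral>\<^sup>+\<omega>. ennreal ((V t \<omega> $ i)^4) \<partial>M)
        = (\<integral>\<^sup>+x. ennreal (std_normal_density x) * ennreal (x^4) \<partial>lborel)"
      by (rule distributed_nn_integral[OF V_gauss[of t i], symmetric]) measurable
    also have "\<dots> = (\<integral>\<^sup>+x. ennreal (std_normal_density x * x^4) \<partial>lborel)"
      by (intro nn_integral_cong) (simp add: ennreal_mult normal_density_nonneg)
    also have "\<dots> = 3" by (rule std_normal_4)
    finally show ?thesis .
  qed
  have norm4: "norm v ^ 4 \<le> d * (\<Sum>i\<in>UNIV. (v$i)^4)" for v :: "real^'n"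
  proof -
    have "norm v ^ 2 = (\<Sum>i\<in>UNIV. (v$i)^2)"
      by (simp only: power2_norm_eq_inner) (simp add: inner_vec_def power2_eq_square)
    then have "norm v ^ 4 = (\<Sum>i\<in>UNIV. (v$i)^2)^2"
      by (metis (no_types, lifting) numeral_Bit0 power_add power2_eq_square numeral_One one_add_one)
    also have "\<dots> \<le> (\<Sum>i\<in>UNIV. ((v$i)^2)^2) * real (card (UNIV :: 'n set))"
      by (rule sum_squared_le_sum_of_squares)
    finally show ?thesis by (simp add: d_def mult.commute flip: power_mult)
  qed
  have EV: "(\<integral>\<^sup>+\<omega>. ennreal (norm (V t \<omega>) ^ 4) \<partial>M) \<le> ennreal (3 * d^2)" for t
  proof -
    have "(\<integral>\<^sup>+\<omega>. ennreal (norm (V t \<omega>) ^ 4) \<partial>M)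
        \<le> (\<integral>\<^sup>+\<omega>. ennreal d * (\<Sum>i\<in>UNIV. ennreal ((V t \<omega> $ i)^4)) \<partial>M)"
    proof (intro nn_integral_mono)
      fix \<omega>
      have "ennreal (norm (V t \<omega>) ^ 4) \<le> ennreal (d * (\<Sum>i\<in>UNIV. (V t \<omega> $ i)^4))"
        by (rule ennreal_leI[OF norm4])
      also have "\<dots> = ennreal d * (\<Sum>i\<in>UNIV. ennreal ((V t \<omega> $ i)^4))"
        by (simp add: sum_ennreal ennreal_mult d_def sum_nonneg)
      finally show "ennreal (norm (V t \<omega>) ^ 4) \<le> ennreal d * (\<Sum>i\<in>UNIV. ennreal ((V t \<omega> $ i)^4))" .
    qed
    also have "\<dots> = ennreal d * (\<Sum>i\<in>UNIV. (\<integral>\<^sup>+\<omega>. ennreal ((V t \<omega> $ i)^4) \<partial>M))"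
    proof -
      note Vi[measurable]
      have ms: "(\<lambda>\<omega>. \<Sum>i\<in>UNIV. ennreal ((V t \<omega> $ i)^4)) \<in> borel_measurable M" by measurable
      have "(\<integral>\<^sup>+\<omega>. (\<Sum>i\<in>UNIV. ennreal ((V t \<omega> $ i)^4)) \<partial>M) = (\<Sum>i\<in>UNIV. (\<integral>\<^sup>+\<omega>. ennreal ((V t \<omega> $ i)^4) \<partial>M))"
        by (rule nn_integral_sum) auto
      then show ?thesis by (simp only: nn_integral_cmult[OF ms])
    qed
    also have "\<dots> = ennreal (3 * d^2)"
    proof -
      have "(\<Sum>i\<in>UNIV. (\<integral>\<^sup>+\<omega>. ennreal ((V t \<omega> $ i)^4) \<partial>M)) = of_nat CARD('n) * 3"
        by (simp add: EVi)
      also have "\<dots> = ennreal (real CARD('n)) * ennreal 3"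
        by (simp add: ennreal_of_nat_eq_real_of_nat)
      also have "\<dots> = ennreal (real CARD('n) * 3)" by (rule ennreal_mult[symmetric]) auto
      also have "\<dots> = ennreal (3 * d)" by (simp add: d_def mult.commute)
      finally have e: "(\<Sum>i\<in>UNIV. (\<integral>\<^sup>+\<omega>. ennreal ((V t \<omega> $ i)^4) \<partial>M)) = ennreal (3 * d)" .
      have "ennreal d * ennreal (3 * d) = ennreal (3 * d^2)"
        by (simp add: d_def ennreal_mult[symmetric] power2_eq_square mult_ac)
      then show ?thesis using e by simp
    qed
    finally show ?thesis .
  qed
  define K where "K = c^4 * (3 * d^2)"
  have K0: "0 \<le> K" using c0 by (simp add: K_def d_def)
  have Eb: "(\<integral>\<^sup>+\<omega>. ennreal (b t \<omega> ^ 4) \<partial>M) \<le> ennreal K" for t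
  proof -
    have "(\<integral>\<^sup>+\<omega>. ennreal (b t \<omega> ^ 4) \<partial>M) \<le> (\<integral>\<^sup>+\<omega>. ennreal (c^4) * ennreal (norm (V t \<omega>) ^ 4) \<partial>M)"
    proof (intro nn_integral_mono)
      fix \<omega>
      have "b t \<omega> ^ 4 \<le> (c * norm (V t \<omega>)) ^ 4"
        using b0 pn_H unfolding b_def by (intro power_mono) auto
      then show "ennreal (b t \<omega> ^ 4) \<le> ennreal (c^4) * ennreal (norm (V t \<omega>) ^ 4)"
        using c0 by (simp add: ennreal_mult[symmetric] power_mult_distrib ennreal_leI)
    qed
    also have "\<dots> = ennreal (c^4) * (\<integral>\<^sup>+\<omega>. ennreal (norm (V t \<omega>) ^ 4) \<partial>M)"
      using Vm by (simp add: nn_integral_cmult)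
    also have "\<dots> \<le> ennreal (c^4) * ennreal (3 * d^2)"
      by (intro mult_left_mono EV) simp
    also have "\<dots> = ennreal K" using c0 by (simp add: K_def ennreal_mult[symmetric])
    finally show ?thesis .
  qed
  have r4: "0 < (1 - r)^4" using r1 by simp
  have Ea: "(\<integral>\<^sup>+\<omega>. ennreal (a t \<omega> ^ 4) \<partial>M) \<le> ennreal (K / (1 - r)^4)" for t
  proof (induction t)
    case 0
    have "(\<integral>\<^sup>+\<omega>. ennreal (a 0 \<omega> ^ 4) \<partial>M) = (\<integral>\<^sup>+\<omega>. ennreal (b 0 \<omega> ^ 4) \<partial>M)"
      by (simp add: a_def b_def)
    also have "\<dots> \<le> ennreal K" by (rule Eb)
    also have "\<dots> \<le> ennreal (K / (1 - r)^4)"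
    proof (intro ennreal_leI)
      have "(1 - r)^4 \<le> 1" using r0 r1 by (intro power_le_one) auto
      then show "K \<le> K / (1 - r)^4" using K0 r4 by (simp add: le_divide_eq mult_left_le)
    qed
    finally show ?case .
  next
    case (Suc t)
    define e where "e = 1 / (1 - r)^3"
    have e0: "0 \<le> e" using r1 by (simp add: e_def)
    have "(\<integral>\<^sup>+\<omega>. ennreal (a (Suc t) \<omega> ^ 4) \<partial>M)
        \<le> (\<integral>\<^sup>+\<omega>. ennreal r * ennreal (a t \<omega> ^ 4) + ennreal (e) * ennreal (b (Suc t) \<omega> ^ 4) \<partial>M)"
    proof (intro nn_integral_mono)
      fix \<omega>
      have "ennreal (a (Suc t) \<omega> ^ 4) \<le> ennreal (r * a t \<omega> ^ 4 + e * b (Suc t) \<omega> ^ 4)"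
        using step4[of t \<omega>] by (intro ennreal_leI) (simp add: e_def)
      also have "\<dots> = ennreal r * ennreal (a t \<omega> ^ 4) + ennreal (e) * ennreal (b (Suc t) \<omega> ^ 4)"
        using r0 e0 a0 b0 by (intro ennreal_lin[symmetric]) auto
      finally show "ennreal (a (Suc t) \<omega> ^ 4) \<le> ennreal r * ennreal (a t \<omega> ^ 4) + ennreal (e) * ennreal (b (Suc t) \<omega> ^ 4)" .
    qed
    also have "\<dots> = ennreal r * (\<integral>\<^sup>+\<omega>. ennreal (a t \<omega> ^ 4) \<partial>M) + ennreal (e) * (\<integral>\<^sup>+\<omega>. ennreal (b (Suc t) \<omega> ^ 4) \<partial>M)"
      using am bm by (simp add: nn_integral_add nn_integral_cmult)
    also have "\<dots> \<le> ennreal r * ennreal (K / (1 - r)^4) + ennreal (e) * ennreal K"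
      by (intro add_mono mult_left_mono Suc.IH Eb) auto
    also have "\<dots> = ennreal (r * (K / (1 - r)^4) + e * K)"
      using r0 e0 K0 r4 by (intro ennreal_lin) auto
    also have "r * (K / (1 - r)^4) + e * K = K / (1 - r)^4"
    proof -
      note e_def[simp]
      have "(1-r)^4 = (1-r) * (1-r)^3" by (simp add: eval_nat_numeral)
      then show ?thesis using geo_fix[OF r1, of "(1-r)^3" K] r1 by simp
    qed
    finally show ?case .
  qed
  define BX where "BX = 12 * sqrt 2 * op_norm H * sqrt (op_norm P) * sqrt (real CARD('n)) / (1 - \<rho>)"
  have KB: "K / (1 - r)^4 \<le> BX ^ 4"
  proof -
    define W where "W = c^4 * d^2"
    have W0: "0 \<le> W" by (simp add: W_def)
    have sq4: "(sqrt x)^4 = x^2" if "0 \<le> x" for x :: real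
      using that by (simp add: eval_nat_numeral)
    have "BX ^ 4 = (12 * sqrt 2)^4 * (sqrt (op_norm P) * op_norm H)^4 * (sqrt d)^4 / (1 - \<rho>)^4"
      by (simp add: BX_def d_def power_mult_distrib power_divide mult_ac)
    also have "\<dots> = 82944 * W / (1 - \<rho>)^4"
      by (simp add: W_def c_def sq4 d_def power_mult_distrib eval_nat_numeral)
    finally have B4: "BX ^ 4 = 82944 * W / (1 - \<rho>)^4" .
    have rho: "1 - \<rho> = (1 - r) * (1 + r)" using r2 by (simp add: algebra_simps power2_eq_square)
    have "(1 + r)^4 \<le> 2^4" using r0 r1 by (intro power_mono) auto
    then have "(1 - \<rho>)^4 \<le> 16 * (1 - r)^4"
      unfolding rho power_mult_distrib using r4 by (simp add: mult.commute)
    then have "3 * (1 - \<rho>)^4 \<le> 82944 * (1 - r)^4" using r4 by linarith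
    then have "3 / (1 - r)^4 \<le> 82944 / (1 - \<rho>)^4"
      using r4 \<rho>_lt by (simp add: divide_simps)
    then have "W * (3 / (1 - r)^4) \<le> W * (82944 / (1 - \<rho>)^4)"
      using W0 by (rule mult_left_mono)
    then show ?thesis by (simp add: B4 K_def W_def mult_ac)
  qed
  show ?thesis
  proof (rule SUP_least)
    fix t
    have "(\<integral>\<^sup>+\<omega>. ennreal (norm (proc s A H V t \<omega>) ^ 4) \<partial>M) \<le> (\<integral>\<^sup>+\<omega>. ennreal (a t \<omega> ^ 4) \<partial>M)"
      by (intro nn_integral_mono ennreal_leI power_mono) (auto simp: a_def pn_ge)
    also have "\<dots> \<le> ennreal (K / (1 - r)^4)" by (rule Ea)
    also have "\<dots> \<le> ennreal (BX ^ 4)" by (rule ennreal_leI[OF KB])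
    finally show "(\<integral>\<^sup>+\<omega>. ennreal (norm (proc s A H V t \<omega>) ^ 4) \<partial>M)
           \<le> ennreal ((12 * sqrt 2 * op_norm H * sqrt (op_norm P) * sqrt (real CARD('n)) / (1 - \<rho>)) ^ 4)"
      by (simp add: BX_def)
  qed
qed

end
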